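(* Let $A$ be an integer matrix with columns $a_1,\dots,a_r$ and $A'$ an integer matrix with columns $a'_1,\dots,a'_s$, and let $I_A\subseteq\mathbb{K}[x_1,\dots,x_r]$ and $I_{A'}\subseteq\mathbb{K}[y_1,\dots,y_s]$ be their toric ideals. Let $Q\subseteq[r]\times[s]$. Then $I_A\times_QI_{A'}$ is the toric ideal of the matrix $A\times_QA'$ whose columns are all vectors $(a_j,a'_k)^T$ with $(j,k)\in Q$ (the column indexed by $(j,k)$ corresponding to the variable $z_{jk}$).
   Context: The toric ideal of an integer matrix $A$ with columns $a_1,\dots,a_r$ is the kernel of the monomial map $x_j\mapsto t^{a_j}$ (Laurent monomial with exponent vector $a_j$). For $Q\subseteq[r]\times[s]$, $\phi_Q:\mathbb{K}[z_{jk}:(j,k)\in Q]\to\mathbb{K}[x,y]$ is $z_{jk}\mapsto x_jy_k$, and the quasi-independence gluing of ideals $I\subseteq\mathbb{K}[x]$, $J\subseteq\mathbb{K}[y]$ is $I\times_QJ:=\phi_Q^{-1}(I+J)$. *)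

theory Defs
  imports Main "HOL-Library.Poly_Mapping"
begin

text \<open>Laurent polynomials in t-variables indexed by 'd have exponents in finitely supported int maps.\<close>

type_synonym ('v, 'K) mpoly = "('v \<Rightarrow>\<^sub>0 nat) \<Rightarrow>\<^sub>0 'K"

definition subst_hom :: "('v \<Rightarrow> ('e::comm_monoid_add \<Rightarrow>\<^sub>0 'K::field)) \<Rightarrow> ('v, 'K) mpoly \<Rightarrow> ('e \<Rightarrow>\<^sub>0 'K)" where
  "subst_hom g p = (\<Sum>mon\<in>Poly_Mapping.keys p. Poly_Mapping.single 0 (Poly_Mapping.lookup p mon) * (\<Prod>x\<in>Poly_Mapping.keys (mon::'v \<Rightarrow>\<^sub>0 nat). g x ^ Poly_Mapping.lookup mon x))"

definition polys_in :: "'v set \<Rightarrow> ('v, 'K::zero) mpoly set" where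
  "polys_in V = {p. \<forall>m\<in>Poly_Mapping.keys p. Poly_Mapping.keys m \<subseteq> V}"

text \<open>Toric ideal of the integer matrix with columns a v (v \<in> V), each column a vector
  in Z^'d: the kernel in K[x_v : v \<in> V] of x_v \<mapsto> t^(a v).\<close>
definition toric_ideal :: "'v set \<Rightarrow> ('v \<Rightarrow> ('d \<Rightarrow>\<^sub>0 int)) \<Rightarrow> ('v, 'K::field) mpoly set" where
  "toric_ideal V a = {p \<in> polys_in V. subst_hom (\<lambda>v. Poly_Mapping.single (a v) (1::'K)) p = 0}"

definition gen_ideal :: "'a::comm_ring_1 set \<Rightarrow> 'a set" where
  "gen_ideal S = {x. \<exists>F c. finite F \<and> F \<subseteq> S \<and> x = (\<Sum>s\<in>F. c s * s)}"

definition rename_vars :: "('v \<Rightarrow> 'w) \<Rightarrow> ('v, 'K::field) mpoly \<Rightarrow> ('w, 'K) mpoly" where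
  "rename_vars f p = subst_hom (\<lambda>v. Poly_Mapping.single (Poly_Mapping.single (f v) 1) 1) p"

text \<open>I + J inside K[x,y], variables x_j = Inl j, y_k = Inr k.\<close>
definition ideal_sum_xy :: "('j, 'K::field) mpoly set \<Rightarrow> ('k, 'K) mpoly set \<Rightarrow> ('j + 'k, 'K) mpoly set" where
  "ideal_sum_xy I J = gen_ideal (rename_vars Inl ` I \<union> rename_vars Inr ` J)"

definition phiQ :: "('j \<times> 'k, 'K::field) mpoly \<Rightarrow> ('j + 'k, 'K) mpoly" where
  "phiQ p = subst_hom (\<lambda>(j,k). Poly_Mapping.single
      (Poly_Mapping.single (Inl j) 1 + Poly_Mapping.single (Inr k) 1) (1::'K)) p"

definition glue :: "('j \<times> 'k) set \<Rightarrow> ('j, 'K::field) mpoly set \<Rightarrow> ('k, 'K) mpoly set \<Rightarrow> ('j \<times> 'k, 'K) mpoly set" where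
  "glue Q I J = {p \<in> polys_in Q. phiQ p \<in> ideal_sum_xy I J}"

definition stack :: "('d \<Rightarrow>\<^sub>0 int) \<Rightarrow> ('e \<Rightarrow>\<^sub>0 int) \<Rightarrow> ('d + 'e \<Rightarrow>\<^sub>0 int)" where
  "stack a b = Abs_poly_mapping (case_sum (Poly_Mapping.lookup a) (Poly_Mapping.lookup b))"

definition glue_matrix :: "('j \<Rightarrow> ('d \<Rightarrow>\<^sub>0 int)) \<Rightarrow> ('k \<Rightarrow> ('e \<Rightarrow>\<^sub>0 int)) \<Rightarrow> ('j \<times> 'k \<Rightarrow> ('d + 'e \<Rightarrow>\<^sub>0 int))" where
  "glue_matrix a b = (\<lambda>(j,k). stack (a j) (b k))"

end

theory Submission
  imports Defs
begin

fun nsm :: "nat \<Rightarrow> 'a::comm_monoid_add \<Rightarrow> 'a" where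
  "nsm 0 c = 0" | "nsm (Suc n) c = c + nsm n c"

lemma nsm_add: "nsm (m + n) c = nsm m c + nsm n c"
  by (induct m) (auto simp: add.assoc)

lemma nsm_distrib: "nsm n (c + d) = nsm n c + nsm n d"
  by (induct n) (auto simp: add_ac)

lemma nsm_zero [simp]: "nsm n 0 = 0"
  by (induct n) auto

lemma nsm_hom:
  assumes "h 0 = 0" "\<And>x y. h (x + y) = h x + h y"
  shows "h (nsm n c) = nsm n (h c)"
  by (induct n) (auto simp: assms)

lemma sum_hom:
  assumes "h 0 = 0" "\<And>x y. h (x + y) = h x + h y"
  shows "h (sum f A) = sum (\<lambda>x. h (f x)) A"
  by (induct A rule: infinite_finite_induct) (auto simp: assms)

definition monexp :: "('v::finite \<Rightarrow> 'g::comm_monoid_add) \<Rightarrow> ('v \<Rightarrow>\<^sub>0 nat) \<Rightarrow> 'g" where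
  "monexp b m = (\<Sum>x\<in>UNIV. nsm (Poly_Mapping.lookup m x) (b x))"

lemma monexp_add: "monexp b (m + m') = monexp b m + monexp b m'"
  by (simp add: monexp_def lookup_add nsm_add sum.distrib)

lemma monexp_zero [simp]: "monexp b 0 = 0"
  by (simp add: monexp_def)

lemma monexp_single: "monexp b (Poly_Mapping.single v n) = nsm n (b v)"
proof -
  have "monexp b (Poly_Mapping.single v n) = (\<Sum>x\<in>UNIV. if v = x then nsm n (b v) else 0)"
    unfolding monexp_def by (rule sum.cong) (auto simp: lookup_single)
  also have "\<dots> = nsm n (b v)" by simp
  finally show ?thesis .
qed

lemma monexp_hom:
  assumes "h 0 = 0" "\<And>x y. h (x + y) = h x + h y"
  shows "monexp (\<lambda>v. h (b v)) m = h (monexp b m)"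
  unfolding monexp_def
  by (subst sum_hom[of h, OF assms]) (simp add: nsm_hom[of h, OF assms])

lemma monexp_comp:
  "monexp b2 (monexp b1 m) = monexp (\<lambda>v. monexp b2 (b1 v)) m"
  by (rule monexp_hom[symmetric]) (auto simp: monexp_add)

definition MM :: "('v::finite \<Rightarrow> 'g::comm_monoid_add) \<Rightarrow> (('v \<Rightarrow>\<^sub>0 nat) \<Rightarrow>\<^sub>0 'K::field) \<Rightarrow> ('g \<Rightarrow>\<^sub>0 'K)" where
  "MM b p = (\<Sum>m\<in>Poly_Mapping.keys p. Poly_Mapping.single (monexp b m) (Poly_Mapping.lookup p m))"

lemma MM_superset:
  assumes "finite S" "Poly_Mapping.keys p \<subseteq> S"
  shows "MM b p = (\<Sum>m\<in>S. Poly_Mapping.single (monexp b m) (Poly_Mapping.lookup p m))"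
  unfolding MM_def
  by (rule sum.mono_neutral_left) (use assms in \<open>auto simp: in_keys_iff\<close>)

lemma MM_add: "MM b (p + q) = MM b p + MM b q"
proof -
  let ?S = "Poly_Mapping.keys p \<union> Poly_Mapping.keys q"
  have "MM b (p + q) = (\<Sum>m\<in>?S. Poly_Mapping.single (monexp b m) (Poly_Mapping.lookup (p + q) m))"
    by (rule MM_superset) (auto dest: set_mp[OF keys_add])
  also have "\<dots> = (\<Sum>m\<in>?S. Poly_Mapping.single (monexp b m) (Poly_Mapping.lookup p m))
     + (\<Sum>m\<in>?S. Poly_Mapping.single (monexp b m) (Poly_Mapping.lookup q m))"
    by (simp add: lookup_add single_add sum.distrib)
  also have "\<dots> = MM b p + MM b q"
    by (subst (1 2) MM_superset[of ?S]) auto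
  finally show ?thesis .
qed

lemma MM_zero [simp]: "MM b 0 = 0"
  by (simp add: MM_def)

lemma MM_uminus: "MM b (- p) = - MM b p"
  by (metis MM_add MM_zero add_eq_0_iff)

lemma MM_diff: "MM b (p - q) = MM b p - MM b q"
  by (metis MM_add MM_uminus diff_conv_add_uminus)

lemma MM_sum: "MM b (sum f A) = (\<Sum>x\<in>A. MM b (f x))"
  by (rule sum_hom) (auto simp: MM_add)

lemma MM_single: "MM b (Poly_Mapping.single k d) = Poly_Mapping.single (monexp b k) d"
  by (subst MM_superset[of "{k}"]) auto

lemma poly_sum_single:
  "(\<Sum>m\<in>Poly_Mapping.keys p. Poly_Mapping.single m (Poly_Mapping.lookup p m)) = p"
proof (rule poly_mapping_eqI)
  fix k
  show "Poly_Mapping.lookup (\<Sum>m\<in>Poly_Mapping.keys p. Poly_Mapping.single m (Poly_Mapping.lookup p m)) k = Poly_Mapping.lookup p k"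
    by (simp add: lookup_sum lookup_single when_def sum.delta in_keys_iff)
qed

lemma MM_mult: "MM b (p * q) = MM b p * MM b q"
proof -
  let ?P = "\<lambda>m. Poly_Mapping.single m (Poly_Mapping.lookup p m)"
  let ?Q = "\<lambda>m. Poly_Mapping.single m (Poly_Mapping.lookup q m)"
  have "p * q = (\<Sum>m\<in>Poly_Mapping.keys p. \<Sum>m'\<in>Poly_Mapping.keys q. ?P m * ?Q m')"
    by (subst (1) poly_sum_single[symmetric, of p], subst (1) poly_sum_single[symmetric, of q])
      (simp add: sum_distrib_left sum_distrib_right, rule sum.swap)
  then have "MM b (p * q) = (\<Sum>m\<in>Poly_Mapping.keys p. \<Sum>m'\<in>Poly_Mapping.keys q. MM b (?P m * ?Q m'))"
    by (simp add: MM_sum)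
  also have "\<dots> = (\<Sum>m\<in>Poly_Mapping.keys p. \<Sum>m'\<in>Poly_Mapping.keys q. MM b (?P m) * MM b (?Q m'))"
    by (simp add: mult_single MM_single monexp_add)
  also have "\<dots> = MM b p * MM b q"
    by (simp only: MM_single) (simp add: MM_def sum_distrib_left sum_distrib_right, rule sum.swap)
  finally show ?thesis .
qed

lemma MM_comp: "MM b2 (MM b1 p) = MM (\<lambda>v. monexp b2 (b1 v)) p"
  by (simp add: MM_def[of b1] MM_sum MM_single monexp_comp) (simp add: MM_def)

lemma pow_single: "(Poly_Mapping.single c (1::'K::comm_semiring_1) :: 'g::comm_monoid_add \<Rightarrow>\<^sub>0 'K) ^ n
   = Poly_Mapping.single (nsm n c) 1"
  by (induct n) (auto simp: mult_single)

lemma prod_single: "(\<Prod>x\<in>A. Poly_Mapping.single (f x) (1::'K::comm_semiring_1) :: 'g::comm_monoid_add \<Rightarrow>\<^sub>0 'K)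
   = Poly_Mapping.single (\<Sum>x\<in>A. f x) 1"
  by (induct A rule: infinite_finite_induct) (auto simp: mult_single)

lemma subst_hom_MM:
  "subst_hom (\<lambda>v. Poly_Mapping.single (b v) 1) (p :: ('v::finite, 'K::field) mpoly) = MM b p"
  unfolding subst_hom_def MM_def
proof (rule sum.cong[OF refl])
  fix mon :: "'v \<Rightarrow>\<^sub>0 nat"
  have "(\<Sum>x\<in>Poly_Mapping.keys mon. nsm (Poly_Mapping.lookup mon x) (b x)) = monexp b mon"
    unfolding monexp_def
    by (rule sum.mono_neutral_left) (auto simp: in_keys_iff)
  then show "Poly_Mapping.single 0 (Poly_Mapping.lookup p mon) *
    (\<Prod>x\<in>Poly_Mapping.keys mon. Poly_Mapping.single (b x) 1 ^ Poly_Mapping.lookup mon x) =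
    Poly_Mapping.single (monexp b mon) (Poly_Mapping.lookup p mon)"
    by (simp add: pow_single prod_single mult_single)
qed


lemma sum_single_zero_iff:
  assumes "finite S"
  shows "((\<Sum>m\<in>S. Poly_Mapping.single (E m) (c m)) = 0) \<longleftrightarrow> (\<forall>y. (\<Sum>m\<in>{m\<in>S. E m = y}. c m) = 0)"
proof -
  have "Poly_Mapping.lookup (\<Sum>m\<in>S. Poly_Mapping.single (E m) (c m)) y = (\<Sum>m\<in>{m\<in>S. E m = y}. c m)" for y
    by (simp add: lookup_sum lookup_single when_def sum.inter_filter[OF assms])
  then show ?thesis by (simp add: poly_mapping_eq_iff fun_eq_iff)
qed

lemma fiber_push:
  assumes "finite S" "\<forall>y. (\<Sum>m\<in>{m\<in>S. E m = y}. c m) = 0"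
  shows "(\<Sum>m\<in>{m\<in>S. h (E m) = y}. c m) = 0"
proof -
  let ?S' = "{m\<in>S. h (E m) = y}"
  have "(\<Sum>m\<in>?S'. c m) = (\<Sum>x\<in>E ` ?S'. \<Sum>m\<in>{m. m \<in> ?S' \<and> E m = x}. c m)"
    by (rule sum.group[symmetric]) (use assms in auto)
  also have "\<dots> = (\<Sum>x\<in>E ` ?S'. \<Sum>m\<in>{m\<in>S. E m = x}. c m)"
    by (rule sum.cong) (auto intro!: sum.cong)
  also have "\<dots> = 0" using assms(2) by (simp only: sum.neutral_const)
  finally show ?thesis .
qed

lemma MM_push:
  assumes "h 0 = 0" "\<And>x y. h (x + y) = h x + h y" "MM b p = 0"
  shows "MM (\<lambda>v. h (b v)) p = 0"
proof -
  have A: "(\<Sum>m\<in>Poly_Mapping.keys p. Poly_Mapping.single (monexp b m) (Poly_Mapping.lookup p m)) = 0"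
    using assms(3) unfolding MM_def .
  note F = sum_single_zero_iff[THEN iffD1, OF finite_keys A]
  show ?thesis unfolding MM_def monexp_hom[of h, OF assms(1,2)]
    by (rule sum_single_zero_iff[THEN iffD2, OF finite_keys], rule allI, rule fiber_push[OF finite_keys F])
qed

lemma rep_zero:
  assumes "finite S" "(\<Sum>m\<in>S. Poly_Mapping.single (E m) (c m)) = 0"
    and "\<And>m. E (r m) = E m" and "\<And>m m'. E m = E m' \<Longrightarrow> r m = r m'"
  shows "(\<Sum>m\<in>S. Poly_Mapping.single (r m) (c m)) = 0"
proof -
  have F: "\<forall>y. (\<Sum>m\<in>{m\<in>S. E m = y}. c m) = 0"
    using assms(2) by (simp add: sum_single_zero_iff[OF assms(1)])
  have "(\<Sum>m\<in>{m\<in>S. r m = U}. c m) = 0" for U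
  proof (cases "\<exists>m0\<in>S. r m0 = U")
    case True
    then obtain m0 where "m0 \<in> S" "r m0 = U" by blast
    have "r m = U \<longleftrightarrow> E m = E m0" for m
    proof
      assume "r m = U"
      then have "E (r m) = E (r m0)" using \<open>r m0 = U\<close> by simp
      then show "E m = E m0" using assms(3) by simp
    next
      assume "E m = E m0"
      then show "r m = U" using assms(4) \<open>r m0 = U\<close> by blast
    qed
    then have "{m\<in>S. r m = U} = {m\<in>S. E m = E m0}" by blast
    then show ?thesis using F by simp
  next
    case False
    have e: "{m\<in>S. r m = U} = {}" using False by auto
    show ?thesis unfolding e by simp
  qed
  then show ?thesis by (subst sum_single_zero_iff[OF assms(1)]) blast
qed

lemma gen_ideal_mem: "s \<in> S \<Longrightarrow> s \<in> gen_ideal S"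
  unfolding gen_ideal_def by (rule CollectI, rule exI[of _ "{s}"], rule exI[of _ "\<lambda>_. 1"]) auto

lemma gen_ideal_zero: "0 \<in> gen_ideal S"
  unfolding gen_ideal_def by (rule CollectI, rule exI[of _ "{}"]) auto

lemma gen_ideal_add:
  assumes "x \<in> gen_ideal S" "y \<in> gen_ideal S"
  shows "x + y \<in> gen_ideal S"
proof -
  obtain F1 c1 where 1: "finite F1" "F1 \<subseteq> S" "x = (\<Sum>s\<in>F1. c1 s * s)"
    using assms(1) unfolding gen_ideal_def by blast
  obtain F2 c2 where 2: "finite F2" "F2 \<subseteq> S" "y = (\<Sum>s\<in>F2. c2 s * s)"
    using assms(2) unfolding gen_ideal_def by blast
  let ?c = "\<lambda>s. (if s \<in> F1 then c1 s else 0) + (if s \<in> F2 then c2 s else 0)"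
  have "(\<Sum>s\<in>F1 \<union> F2. ?c s * s) = (\<Sum>s\<in>F1 \<union> F2. (if s \<in> F1 then c1 s * s else 0))
      + (\<Sum>s\<in>F1 \<union> F2. (if s \<in> F2 then c2 s * s else 0))"
    unfolding sum.distrib[symmetric] by (rule sum.cong) (auto simp: distrib_right)
  also have "\<dots> = x + y"
  proof -
    have e1: "{s \<in> F1 \<union> F2. s \<in> F1} = F1" "{s \<in> F1 \<union> F2. s \<in> F2} = F2" by blast+
    have "(\<Sum>s\<in>F1 \<union> F2. (if s \<in> F1 then c1 s * s else 0)) = (\<Sum>s\<in>{s \<in> F1 \<union> F2. s \<in> F1}. c1 s * s)"
      using 1 2 by (simp only: sum.inter_filter finite_UnI)
    moreover have "(\<Sum>s\<in>F1 \<union> F2. (if s \<in> F2 then c2 s * s else 0)) = (\<Sum>s\<in>{s \<in> F1 \<union> F2. s \<in> F2}. c2 s * s)"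
      using 1 2 by (simp only: sum.inter_filter finite_UnI)
    ultimately show ?thesis unfolding e1 1(3) 2(3) by (rule arg_cong2[where f="(+)"])
  qed
  finally have eq0: "(\<Sum>s\<in>F1 \<union> F2. ?c s * s) = x + y" .
  note eq = eq0[symmetric]
  have "finite (F1 \<union> F2)" "F1 \<union> F2 \<subseteq> S" using 1 2 by auto
  then show ?thesis unfolding gen_ideal_def
    by (intro CollectI exI[of _ "F1 \<union> F2"] exI[of _ ?c] conjI) (assumption | rule eq)+
qed

lemma gen_ideal_mult:
  assumes "x \<in> gen_ideal S"
  shows "r * x \<in> gen_ideal S"
proof -
  obtain F c where 1: "finite F" "F \<subseteq> S" "x = (\<Sum>s\<in>F. c s * s)"
    using assms(1) unfolding gen_ideal_def by blast
  then have eq: "r * x = (\<Sum>s\<in>F. (r * c s) * s)" by (simp add: sum_distrib_left mult.assoc)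
  show ?thesis unfolding gen_ideal_def
    by (intro CollectI exI[of _ F] exI[of _ "\<lambda>s. r * c s"] conjI) (rule 1 eq)+
qed

lemma gen_ideal_sum:
  "(\<And>i. i \<in> A \<Longrightarrow> f i \<in> gen_ideal S) \<Longrightarrow> sum f A \<in> gen_ideal S"
  by (induct A rule: infinite_finite_induct) (auto intro: gen_ideal_add gen_ideal_zero)


lemma lookup_stack:
  "Poly_Mapping.lookup (stack (x :: 'd::finite \<Rightarrow>\<^sub>0 int) (y :: 'e::finite \<Rightarrow>\<^sub>0 int))
     = case_sum (Poly_Mapping.lookup x) (Poly_Mapping.lookup y)"
proof -
  have "finite {i. case_sum (Poly_Mapping.lookup x) (Poly_Mapping.lookup y) i \<noteq> 0}"
    by (rule finite_subset[OF subset_UNIV]) simp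
  then show ?thesis unfolding stack_def by simp
qed

lemma stack_add:
  "stack (x :: 'd::finite \<Rightarrow>\<^sub>0 int) (y :: 'e::finite \<Rightarrow>\<^sub>0 int) + stack x' y' = stack (x + x') (y + y')"
  by (rule poly_mapping_eqI) (auto simp: lookup_add lookup_stack split: sum.split)

lemma stack_zero: "stack (0 :: 'd::finite \<Rightarrow>\<^sub>0 int) (0 :: 'e::finite \<Rightarrow>\<^sub>0 int) = 0"
  by (rule poly_mapping_eqI) (auto simp: lookup_stack split: sum.split)

lemma stack_inj:
  assumes "stack (x :: 'd::finite \<Rightarrow>\<^sub>0 int) (y :: 'e::finite \<Rightarrow>\<^sub>0 int) = stack x' y'"
  shows "x = x'" "y = y'"
proof -
  have "Poly_Mapping.lookup (stack x y) (Inl i) = Poly_Mapping.lookup (stack x' y') (Inl i)" for i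
    using assms by simp
  then show "x = x'" by (intro poly_mapping_eqI) (simp add: lookup_stack)
  have "Poly_Mapping.lookup (stack x y) (Inr i) = Poly_Mapping.lookup (stack x' y') (Inr i)" for i
    using assms by simp
  then show "y = y'" by (intro poly_mapping_eqI) (simp add: lookup_stack)
qed

lemma nsm_one [simp]: "nsm (Suc 0) c = c"
  by simp

lemma monexp_var: "monexp c (Poly_Mapping.single v (Suc 0)) = c v"
  by (simp add: monexp_single)

lemma ren_MM: "rename_vars (f :: 'v::finite \<Rightarrow> 'w) (p :: ('v, 'K::field) mpoly) = MM (\<lambda>v. Poly_Mapping.single (f v) 1) p"
  unfolding rename_vars_def by (rule subst_hom_MM)

lemma toric_MM: "p \<in> toric_ideal V a \<longleftrightarrow> p \<in> polys_in V \<and> MM a (p :: ('v::finite, 'K::field) mpoly) = 0"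
  unfolding toric_ideal_def by (simp add: subst_hom_MM)

definition bphi :: "'j \<times> 'k \<Rightarrow> ('j + 'k \<Rightarrow>\<^sub>0 nat)" where
  "bphi = (\<lambda>(j,k). Poly_Mapping.single (Inl j) 1 + Poly_Mapping.single (Inr k) 1)"

lemma phi_MM: "phiQ (p :: ('j::finite \<times> 'k::finite, 'K::field) mpoly) = MM bphi p"
proof -
  have e: "(\<lambda>(j,k). Poly_Mapping.single (Poly_Mapping.single (Inl j) 1 + Poly_Mapping.single (Inr k) 1) (1::'K))
     = (\<lambda>v. Poly_Mapping.single (bphi v) 1)"
    by (auto simp: fun_eq_iff bphi_def)
  show ?thesis unfolding phiQ_def e by (rule subst_hom_MM)
qed

definition cpsi :: "('j \<Rightarrow> ('d::finite \<Rightarrow>\<^sub>0 int)) \<Rightarrow> ('k \<Rightarrow> ('e::finite \<Rightarrow>\<^sub>0 int)) \<Rightarrow> 'j + 'k \<Rightarrow> ('d + 'e \<Rightarrow>\<^sub>0 int)" where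
  "cpsi a a' = case_sum (\<lambda>j. stack (a j) 0) (\<lambda>k. stack 0 (a' k))"

lemma cpsi_bphi: "monexp (cpsi a a') (bphi v) = glue_matrix a a' (v :: 'j::finite \<times> 'k::finite)"
  by (cases v) (simp add: bphi_def monexp_add monexp_var cpsi_def glue_matrix_def stack_add)

lemma psi_kill:
  fixes a :: "'j::finite \<Rightarrow> ('d::finite \<Rightarrow>\<^sub>0 int)"
    and a' :: "'k::finite \<Rightarrow> ('e::finite \<Rightarrow>\<^sub>0 int)"
  assumes "x \<in> ideal_sum_xy (toric_ideal UNIV a :: ('j, 'K::field) mpoly set) (toric_ideal UNIV a')"
  shows "MM (cpsi a a') x = 0"
proof -
  have L: "MM (cpsi a a') (rename_vars Inl p) = 0" if "p \<in> (toric_ideal UNIV a :: ('j, 'K) mpoly set)" for p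
  proof -
    have "MM (cpsi a a') (rename_vars Inl p) = MM (\<lambda>j. stack (a j) 0) p"
      by (simp add: ren_MM MM_comp monexp_var cpsi_def)
    also have "\<dots> = 0"
      by (rule MM_push[where h = "\<lambda>x. stack x 0"]) (use that in \<open>auto simp: stack_zero stack_add toric_MM\<close>)
    finally show ?thesis .
  qed
  have R: "MM (cpsi a a') (rename_vars Inr p) = 0" if "p \<in> (toric_ideal UNIV a' :: ('k, 'K) mpoly set)" for p
  proof -
    have "MM (cpsi a a') (rename_vars Inr p) = MM (\<lambda>k. stack 0 (a' k)) p"
      by (simp add: ren_MM MM_comp monexp_var cpsi_def)
    also have "\<dots> = 0"
      by (rule MM_push[where h = "\<lambda>x. stack 0 x"]) (use that in \<open>auto simp: stack_zero stack_add toric_MM\<close>)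
    finally show ?thesis .
  qed
  obtain F c where F: "finite F" "F \<subseteq> rename_vars Inl ` (toric_ideal UNIV a :: ('j, 'K) mpoly set) \<union> rename_vars Inr ` toric_ideal UNIV a'"
    "x = (\<Sum>s\<in>F. c s * s)"
    using assms unfolding ideal_sum_xy_def gen_ideal_def by blast
  have "MM (cpsi a a') s = 0" if "s \<in> F" for s
    using F(2) that L R by blast
  then show ?thesis unfolding F(3) by (simp add: MM_sum MM_mult)
qed


lemma nsm_single: "nsm n (Poly_Mapping.single k (1::nat)) = Poly_Mapping.single k n"
  by (induct n) (simp_all add: single_add[symmetric])

lemma nsm_single': "nsm n (Poly_Mapping.single k (Suc 0)) = Poly_Mapping.single k n"
  using nsm_single by simp

lemma monexp_vars: "monexp (\<lambda>j. Poly_Mapping.single (f j) (1::nat)) u = (\<Sum>j\<in>UNIV. Poly_Mapping.single (f j) (Poly_Mapping.lookup u j))"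
  by (simp add: monexp_def nsm_single')

lemma lookup_Abs_fin [simp]: "Poly_Mapping.lookup (Abs_poly_mapping (f :: 'a::finite \<Rightarrow> 'b::zero)) = f"
  by simp

abbreviation LL :: "('j::finite \<Rightarrow>\<^sub>0 nat) \<Rightarrow> ('j + 'k \<Rightarrow>\<^sub>0 nat)" where
  "LL u \<equiv> monexp (\<lambda>j. Poly_Mapping.single (Inl j) 1) u"
abbreviation RR :: "('k::finite \<Rightarrow>\<^sub>0 nat) \<Rightarrow> ('j + 'k \<Rightarrow>\<^sub>0 nat)" where
  "RR v \<equiv> monexp (\<lambda>k. Poly_Mapping.single (Inr k) 1) v"

lemma decomp:
  fixes m :: "'j::finite + 'k::finite \<Rightarrow>\<^sub>0 nat"
  shows "\<exists>u v. m = LL u + RR v"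
proof (intro exI)
  show "m = LL (Abs_poly_mapping (\<lambda>j. Poly_Mapping.lookup m (Inl j))) + RR (Abs_poly_mapping (\<lambda>k. Poly_Mapping.lookup m (Inr k)))"
  proof (rule poly_mapping_eqI)
    fix x
    show "Poly_Mapping.lookup m x = Poly_Mapping.lookup (LL (Abs_poly_mapping (\<lambda>j. Poly_Mapping.lookup m (Inl j))) + RR (Abs_poly_mapping (\<lambda>k. Poly_Mapping.lookup m (Inr k)))) x"
      unfolding monexp_vars by (cases x) (simp_all add: lookup_add lookup_sum lookup_single when_def)
  qed
qed

lemma cpsi_split:
  fixes a :: "'j::finite \<Rightarrow> ('d::finite \<Rightarrow>\<^sub>0 int)"
    and a' :: "'k::finite \<Rightarrow> ('e::finite \<Rightarrow>\<^sub>0 int)"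
  shows "monexp (cpsi a a') (LL u + RR v) = stack (monexp a u) (monexp a' v)"
proof -
  have 1: "monexp (cpsi a a') (LL u) = stack (monexp a u) 0"
  proof -
    have "monexp (cpsi a a') (LL u) = monexp (\<lambda>j. stack (a j) 0) u"
      by (simp add: monexp_comp monexp_var cpsi_def)
    also have "\<dots> = stack (monexp a u) 0"
      by (rule monexp_hom[where h="\<lambda>x. stack x 0"]) (simp_all add: stack_zero stack_add)
    finally show ?thesis .
  qed
  have 2: "monexp (cpsi a a') (RR v) = stack 0 (monexp a' v)"
  proof -
    have "monexp (cpsi a a') (RR v) = monexp (\<lambda>k. stack 0 (a' k)) v"
      by (simp add: monexp_comp monexp_var cpsi_def)
    also have "\<dots> = stack 0 (monexp a' v)"
      by (rule monexp_hom[where h="\<lambda>x. stack 0 x"]) (simp_all add: stack_zero stack_add)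
    finally show ?thesis .
  qed
  show ?thesis by (simp only: monexp_add 1 2 stack_add) simp
qed

lemma binom:
  fixes a :: "'j::finite \<Rightarrow> ('d::finite \<Rightarrow>\<^sub>0 int)"
    and a' :: "'k::finite \<Rightarrow> ('e::finite \<Rightarrow>\<^sub>0 int)"
    and m m' :: "'j + 'k \<Rightarrow>\<^sub>0 nat"
  assumes "monexp (cpsi a a') m = monexp (cpsi a a') m'"
  shows "(Poly_Mapping.single m 1 - Poly_Mapping.single m' 1 :: ('j + 'k, 'K::field) mpoly)
     \<in> ideal_sum_xy (toric_ideal UNIV a :: ('j, 'K) mpoly set) (toric_ideal UNIV a')"
proof -
  obtain u v where m: "m = LL u + RR v" using decomp by blast
  obtain u' v' where m': "m' = LL u' + RR v'" using decomp by blast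
  have "stack (monexp a u) (monexp a' v) = stack (monexp a u') (monexp a' v')"
    using assms unfolding m m' cpsi_split .
  note eu = stack_inj(1)[OF this] and ev = stack_inj(2)[OF this]
  let ?I = "rename_vars Inl ` (toric_ideal UNIV a :: ('j, 'K) mpoly set) \<union> rename_vars Inr ` toric_ideal UNIV a'"
  let ?X = "\<lambda>u. Poly_Mapping.single (LL u) (1::'K) :: ('j + 'k, 'K) mpoly"
  let ?Y = "\<lambda>v. Poly_Mapping.single (RR v) (1::'K) :: ('j + 'k, 'K) mpoly"
  have X: "?X u - ?X u' \<in> gen_ideal ?I"
  proof -
    have "(Poly_Mapping.single u 1 - Poly_Mapping.single u' 1 :: ('j, 'K) mpoly) \<in> toric_ideal UNIV a"
      by (simp add: toric_MM polys_in_def MM_diff MM_single eu)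
    moreover have "?X u - ?X u' = rename_vars Inl (Poly_Mapping.single u 1 - Poly_Mapping.single u' 1 :: ('j, 'K) mpoly)"
      by (simp add: ren_MM MM_diff MM_single)
    ultimately show ?thesis by (intro gen_ideal_mem) auto
  qed
  have Y: "?Y v - ?Y v' \<in> gen_ideal ?I"
  proof -
    have "(Poly_Mapping.single v 1 - Poly_Mapping.single v' 1 :: ('k, 'K) mpoly) \<in> toric_ideal UNIV a'"
      by (simp add: toric_MM polys_in_def MM_diff MM_single ev)
    moreover have "?Y v - ?Y v' = rename_vars Inr (Poly_Mapping.single v 1 - Poly_Mapping.single v' 1 :: ('k, 'K) mpoly)"
      by (simp add: ren_MM MM_diff MM_single)
    ultimately show ?thesis by (intro gen_ideal_mem) auto
  qed
  have e1: "Poly_Mapping.single m (1::'K) = ?X u * ?Y v" by (simp add: m mult_single)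
  have e2: "Poly_Mapping.single m' (1::'K) = ?X u' * ?Y v'" by (simp add: m' mult_single)
  have "Poly_Mapping.single m 1 - Poly_Mapping.single m' 1 = ?Y v * (?X u - ?X u') + ?X u' * (?Y v - ?Y v')"
    unfolding e1 e2 by (simp add: algebra_simps)
  also have "\<dots> \<in> gen_ideal ?I"
    by (intro gen_ideal_add gen_ideal_mult X Y)
  finally show ?thesis unfolding ideal_sum_xy_def .
qed

theorem corollary3p11:
  fixes a :: "'j::finite \<Rightarrow> ('d::finite \<Rightarrow>\<^sub>0 int)"
    and a' :: "'k::finite \<Rightarrow> ('e::finite \<Rightarrow>\<^sub>0 int)"
    and Q :: "('j \<times> 'k) set"
  shows "glue Q (toric_ideal UNIV a :: ('j, 'K::field) mpoly set) (toric_ideal UNIV a')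
       = toric_ideal Q (glue_matrix a a')"
proof (intro set_eqI iffI)
  fix p assume "p \<in> glue Q (toric_ideal UNIV a :: ('j, 'K::field) mpoly set) (toric_ideal UNIV a')"
  then have pQ: "p \<in> polys_in Q" and ph: "phiQ p \<in> ideal_sum_xy (toric_ideal UNIV a :: ('j, 'K::field) mpoly set) (toric_ideal UNIV a')"
    by (simp_all add: glue_def)
  have "MM (glue_matrix a a') p = MM (cpsi a a') (phiQ p)"
    by (simp add: phi_MM MM_comp cpsi_bphi)
  also have "\<dots> = 0" by (rule psi_kill[OF ph])
  finally show "p \<in> toric_ideal Q (glue_matrix a a')" using pQ by (simp add: toric_MM)
next
  fix p :: "('j \<times> 'k, 'K) mpoly"
  assume "p \<in> toric_ideal Q (glue_matrix a a')"
  then have pQ: "p \<in> polys_in Q" and z: "MM (glue_matrix a a') p = 0"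
    by (simp_all add: toric_MM)
  define E where "E = monexp (glue_matrix a a')"
  define r where "r = (\<lambda>w. SOME w'. E w' = E w)"
  have r1: "E (r w) = E w" for w
    unfolding r_def by (rule someI[where x = w]) (rule refl)
  have r2: "r w = r w'" if "E w = E w'" for w w'
    unfolding r_def using that by simp
  let ?S = "Poly_Mapping.keys p" and ?c = "Poly_Mapping.lookup p"
  have Z: "(\<Sum>w\<in>?S. Poly_Mapping.single (r w) (?c w)) = 0"
    by (rule rep_zero[of ?S E]) (simp, use z in \<open>simp add: MM_def E_def\<close>, rule r1, erule r2)
  have Eb: "monexp (cpsi a a') (monexp bphi w) = E w" for w
    by (simp add: monexp_comp cpsi_bphi E_def)
  have "phiQ p = MM bphi (\<Sum>w\<in>?S. Poly_Mapping.single w (?c w)) - MM bphi (\<Sum>w\<in>?S. Poly_Mapping.single (r w) (?c w))"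
    using Z by (simp add: phi_MM poly_sum_single)
  also have "\<dots> = (\<Sum>w\<in>?S. Poly_Mapping.single 0 (?c w) *
      (Poly_Mapping.single (monexp bphi w) 1 - Poly_Mapping.single (monexp bphi (r w)) 1))"
    by (simp add: MM_sum MM_single sum_subtractf[symmetric] right_diff_distrib mult_single)
  also have "\<dots> \<in> ideal_sum_xy (toric_ideal UNIV a :: ('j, 'K::field) mpoly set) (toric_ideal UNIV a')"
    unfolding ideal_sum_xy_def
    by (intro gen_ideal_sum gen_ideal_mult binom[unfolded ideal_sum_xy_def]) (simp add: Eb r1)
  finally show "p \<in> glue Q (toric_ideal UNIV a :: ('j, 'K::field) mpoly set) (toric_ideal UNIV a')"
    using pQ by (simp add: glue_def)
qed

end
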